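(* Suppose that all state functions and controls are continuously differentiable on $I$. As long as $\epsilon(t)\neq 0$, $n^j(t)\neq 0$ and $V^j(t)\neq 0$ for all $j\in\{1,\dots,S\}$ and all $t\in I$, system (A) is equivalent to the "basic system" obtained from (A) by replacing the component mole balances (CM$_0$) by the original component mole balances (OCM) (for all $i=1,\dots,C$) and replacing the total mole balances (TM) by the vapor summation equations (YS). That is, a tuple of state functions satisfying these non-vanishing conditions on $I$ solves (A) if and only if it solves the basic system.
   Context: Fix integers $S\ge 2$ (stages) and $C\ge 2$ (components) and an interval $I\subset\mathbb R$. Given are continuously differentiable real functions $f_{\mathrm{vle},i}(P,T,\mathbf x)$ ($i=1,\dots,C$), $f_{\mathrm{hl}}(T,\mathbf x)$, $f_{\mathrm{hv}}(T,\mathbf y)$, $f_{\mathrm{holdup}}(L)$, with $P,T,L\in\mathbb R$, $\mathbf x,\mathbf y\in\mathbb R^C$. Controls are continuously differentiable real functions $\epsilon,P,Q,T^{\mathrm{cond}}$ on $I$. State variables are real functions on $I$: $n^j,H^j,T^j,V^j$ and vectors $\mathbf x^j=(x^j_1,\dots,x^j_C)$, $\mathbf y^j=(y^j_1,\dots,y^j_C)$ for $j=1,\dots,S$, and $L^j$ for $j=1,\dots,S-1$. A solution of a system is a tuple of continuously differentiable state functions satisfying all its equations at every $t\in I$; dots are time derivatives. Two systems are equivalent as long as a condition holds if their sets of solutions satisfying that condition on $I$ coincide. Below, "$2\le j\le S-1$" marks the middle-stage equations. (TM): $\dot n^1=L^1-V^1$; $\dot n^j=L^j-V^j-L^{j-1}+V^{j-1}$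 ($2\le j\le S-1$); $\dot n^S=-\epsilon V^S-L^{S-1}+V^{S-1}$. (CM$_0$), for $i=1,\dots,C$: $\dot x_i^1=\big(L^1(x_i^2-x_i^1)-V^1(y_i^1-x_i^1)\big)/n^1$; $\dot x_i^j=\big(L^j(x_i^{j+1}-x_i^j)-V^j(y_i^j-x_i^j)+V^{j-1}(y_i^{j-1}-x_i^j)\big)/n^j$ ($2\le j\le S-1$); $\dot x_i^S=\big(-\epsilon V^S(y_i^S-x_i^S)+V^{S-1}(y_i^{S-1}-x_i^S)\big)/n^S$. (EB): $\dot H^1=L^1f_{\mathrm{hl}}(T^2,\mathbf x^2)-V^1f_{\mathrm{hv}}(T^1,\mathbf y^1)+Q$; $\dot H^j=L^jf_{\mathrm{hl}}(T^{j+1},\mathbf x^{j+1})-V^jf_{\mathrm{hv}}(T^j,\mathbf y^j)-L^{j-1}f_{\mathrm{hl}}(T^j,\mathbf x^j)+V^{j-1}f_{\mathrm{hv}}(T^{j-1},\mathbf y^{j-1})$ ($2\le j\le S-1$); $\dot H^S=(1-\epsilon)V^Sf_{\mathrm{hl}}(T^{\mathrm{cond}},\mathbf y^S)-V^Sf_{\mathrm{hv}}(T^S,\mathbf y^S)-L^{S-1}f_{\mathrm{hl}}(T^S,\mathbf x^S)+V^{S-1}f_{\mathrm{hv}}(T^{S-1},\mathbf y^{S-1})$. (XS): $\sum_{i=1}^C x_i^j=1$, $j=1,\dots,S$. (YD): $y_i^j=f_{\mathrm{vle},i}(P,T^j,\mathbf x^j)$ for all $i,j$. (ED): $H^j=n^jf_{\mathrm{hl}}(T^j,\mathbf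 x^j)$, $j=1,\dots,S$. (HO): $n^j=f_{\mathrm{holdup}}(L^{j-1})$, $j=2,\dots,S$. System (A) consists of (TM), (CM$_0$), (EB), (XS), (YD), (ED), (HO). (YS): $\sum_{i=1}^C y_i^j=1$, $j=1,\dots,S$. (OCM), for $i=1,\dots,C$: $\frac{d}{dt}(n^1x_i^1)=L^1x_i^2-V^1y_i^1$; $\frac{d}{dt}(n^jx_i^j)=L^jx_i^{j+1}-V^jy_i^j-L^{j-1}x_i^j+V^{j-1}y_i^{j-1}$ ($2\le j\le S-1$); $\frac{d}{dt}(n^Sx_i^S)=-\epsilon V^Sy_i^S-L^{S-1}x_i^S+V^{S-1}y_i^{S-1}$. *)

theory Defs
  imports "HOL-Analysis.Analysis"
begin

abbreviation Dt :: "real set \<Rightarrow> (real \<Rightarrow> 'a::real_normed_vector) \<Rightarrow> real \<Rightarrow> 'a" where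
  "Dt I f t \<equiv> vector_derivative f (at t within I)"

definition C1_on :: "real set \<Rightarrow> (real \<Rightarrow> 'a::real_normed_vector) \<Rightarrow> bool" where
  "C1_on I f \<longleftrightarrow> (\<exists>f'. (\<forall>t\<in>I. (f has_vector_derivative f' t) (at t within I)) \<and> continuous_on I f')"

definition C1_map :: "('a::real_normed_vector \<Rightarrow> 'b::real_normed_vector) \<Rightarrow> bool" where
  "C1_map f \<longleftrightarrow> (\<exists>f'. (\<forall>z. (f has_derivative blinfun_apply (f' z)) (at z)) \<and> continuous_on UNIV f')"

text \<open>States: n, H, T, V, L :: stage => time => real; x, y :: stage => time => real^'c
  (component index type 'c, C = CARD('c)). Controls eps, P, Q, Tc :: time => real.\<close>

definition TM :: "real set \<Rightarrow> nat \<Rightarrow> (real \<Rightarrow> real) \<Rightarrow> (nat \<Rightarrow> real \<Rightarrow> real) \<Rightarrow>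
    (nat \<Rightarrow> real \<Rightarrow> real) \<Rightarrow> (nat \<Rightarrow> real \<Rightarrow> real) \<Rightarrow> bool" where
  "TM I S eps n L V \<longleftrightarrow> (\<forall>t\<in>I.
     Dt I (n 1) t = L 1 t - V 1 t \<and>
     (\<forall>j\<in>{2..S-1}. Dt I (n j) t = L j t - V j t - L (j-1) t + V (j-1) t) \<and>
     Dt I (n S) t = - eps t * V S t - L (S-1) t + V (S-1) t)"

definition CM0 :: "real set \<Rightarrow> nat \<Rightarrow> (real \<Rightarrow> real) \<Rightarrow> (nat \<Rightarrow> real \<Rightarrow> real) \<Rightarrow>
    (nat \<Rightarrow> real \<Rightarrow> real) \<Rightarrow> (nat \<Rightarrow> real \<Rightarrow> real) \<Rightarrow>
    (nat \<Rightarrow> real \<Rightarrow> real^'c) \<Rightarrow> (nat \<Rightarrow> real \<Rightarrow> real^'c) \<Rightarrow> bool" where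
  "CM0 I S eps n L V x y \<longleftrightarrow> (\<forall>t\<in>I. \<forall>i.
     Dt I (\<lambda>s. x 1 s $ i) t =
       (L 1 t * (x 2 t $ i - x 1 t $ i) - V 1 t * (y 1 t $ i - x 1 t $ i)) / n 1 t \<and>
     (\<forall>j\<in>{2..S-1}. Dt I (\<lambda>s. x j s $ i) t =
       (L j t * (x (j+1) t $ i - x j t $ i) - V j t * (y j t $ i - x j t $ i)
        + V (j-1) t * (y (j-1) t $ i - x j t $ i)) / n j t) \<and>
     Dt I (\<lambda>s. x S s $ i) t =
       (- eps t * V S t * (y S t $ i - x S t $ i)
        + V (S-1) t * (y (S-1) t $ i - x S t $ i)) / n S t)"

definition EB :: "real set \<Rightarrow> nat \<Rightarrow> (real \<Rightarrow> real^'c \<Rightarrow> real) \<Rightarrow> (real \<Rightarrow> real^'c \<Rightarrow> real) \<Rightarrow>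
    (real \<Rightarrow> real) \<Rightarrow> (real \<Rightarrow> real) \<Rightarrow> (real \<Rightarrow> real) \<Rightarrow>
    (nat \<Rightarrow> real \<Rightarrow> real) \<Rightarrow> (nat \<Rightarrow> real \<Rightarrow> real) \<Rightarrow> (nat \<Rightarrow> real \<Rightarrow> real) \<Rightarrow> (nat \<Rightarrow> real \<Rightarrow> real) \<Rightarrow>
    (nat \<Rightarrow> real \<Rightarrow> real^'c) \<Rightarrow> (nat \<Rightarrow> real \<Rightarrow> real^'c) \<Rightarrow> bool" where
  "EB I S fhl fhv eps Q Tc H T L V x y \<longleftrightarrow> (\<forall>t\<in>I.
     Dt I (H 1) t = L 1 t * fhl (T 2 t) (x 2 t) - V 1 t * fhv (T 1 t) (y 1 t) + Q t \<and>
     (\<forall>j\<in>{2..S-1}. Dt I (H j) t =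
        L j t * fhl (T (j+1) t) (x (j+1) t) - V j t * fhv (T j t) (y j t)
        - L (j-1) t * fhl (T j t) (x j t) + V (j-1) t * fhv (T (j-1) t) (y (j-1) t)) \<and>
     Dt I (H S) t = (1 - eps t) * V S t * fhl (Tc t) (y S t) - V S t * fhv (T S t) (y S t)
        - L (S-1) t * fhl (T S t) (x S t) + V (S-1) t * fhv (T (S-1) t) (y (S-1) t))"

definition XS :: "real set \<Rightarrow> nat \<Rightarrow> (nat \<Rightarrow> real \<Rightarrow> real^'c) \<Rightarrow> bool" where
  "XS I S x \<longleftrightarrow> (\<forall>t\<in>I. \<forall>j\<in>{1..S}. (\<Sum>i\<in>UNIV. x j t $ i) = 1)"

definition YS :: "real set \<Rightarrow> nat \<Rightarrow> (nat \<Rightarrow> real \<Rightarrow> real^'c) \<Rightarrow> bool" where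
  "YS I S y \<longleftrightarrow> (\<forall>t\<in>I. \<forall>j\<in>{1..S}. (\<Sum>i\<in>UNIV. y j t $ i) = 1)"

definition YD :: "real set \<Rightarrow> nat \<Rightarrow> ('c \<Rightarrow> real \<Rightarrow> real \<Rightarrow> real^'c \<Rightarrow> real) \<Rightarrow> (real \<Rightarrow> real) \<Rightarrow>
    (nat \<Rightarrow> real \<Rightarrow> real) \<Rightarrow> (nat \<Rightarrow> real \<Rightarrow> real^'c) \<Rightarrow> (nat \<Rightarrow> real \<Rightarrow> real^'c) \<Rightarrow> bool" where
  "YD I S fvle P T x y \<longleftrightarrow> (\<forall>t\<in>I. \<forall>j\<in>{1..S}. \<forall>i. y j t $ i = fvle i (P t) (T j t) (x j t))"

definition ED :: "real set \<Rightarrow> nat \<Rightarrow> (real \<Rightarrow> real^'c \<Rightarrow> real) \<Rightarrow>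
    (nat \<Rightarrow> real \<Rightarrow> real) \<Rightarrow> (nat \<Rightarrow> real \<Rightarrow> real) \<Rightarrow> (nat \<Rightarrow> real \<Rightarrow> real) \<Rightarrow>
    (nat \<Rightarrow> real \<Rightarrow> real^'c) \<Rightarrow> bool" where
  "ED I S fhl n H T x \<longleftrightarrow> (\<forall>t\<in>I. \<forall>j\<in>{1..S}. H j t = n j t * fhl (T j t) (x j t))"

definition HO :: "real set \<Rightarrow> nat \<Rightarrow> (real \<Rightarrow> real) \<Rightarrow> (nat \<Rightarrow> real \<Rightarrow> real) \<Rightarrow>
    (nat \<Rightarrow> real \<Rightarrow> real) \<Rightarrow> bool" where
  "HO I S fholdup n L \<longleftrightarrow> (\<forall>t\<in>I. \<forall>j\<in>{2..S}. n j t = fholdup (L (j-1) t))"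

definition OCM :: "real set \<Rightarrow> nat \<Rightarrow> (real \<Rightarrow> real) \<Rightarrow> (nat \<Rightarrow> real \<Rightarrow> real) \<Rightarrow>
    (nat \<Rightarrow> real \<Rightarrow> real) \<Rightarrow> (nat \<Rightarrow> real \<Rightarrow> real) \<Rightarrow>
    (nat \<Rightarrow> real \<Rightarrow> real^'c) \<Rightarrow> (nat \<Rightarrow> real \<Rightarrow> real^'c) \<Rightarrow> bool" where
  "OCM I S eps n L V x y \<longleftrightarrow> (\<forall>t\<in>I. \<forall>i.
     Dt I (\<lambda>s. n 1 s * x 1 s $ i) t = L 1 t * x 2 t $ i - V 1 t * y 1 t $ i \<and>
     (\<forall>j\<in>{2..S-1}. Dt I (\<lambda>s. n j s * x j s $ i) t =
        L j t * x (j+1) t $ i - V j t * y j t $ i - L (j-1) t * x j t $ i + V (j-1) t * y (j-1) t $ i) \<and>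
     Dt I (\<lambda>s. n S s * x S s $ i) t =
        - eps t * V S t * y S t $ i - L (S-1) t * x S t $ i + V (S-1) t * y (S-1) t $ i)"

definition sysA where
  "sysA I S fvle fhl fhv fholdup eps P Q Tc n H T V L x y \<longleftrightarrow>
     TM I S eps n L V \<and> CM0 I S eps n L V x y \<and> EB I S fhl fhv eps Q Tc H T L V x y \<and>
     XS I S x \<and> YD I S fvle P T x y \<and> ED I S fhl n H T x \<and> HO I S fholdup n L"

definition sysBasic where
  "sysBasic I S fvle fhl fhv fholdup eps P Q Tc n H T V L x y \<longleftrightarrow>
     YS I S y \<and> OCM I S eps n L V x y \<and> EB I S fhl fhv eps Q Tc H T L V x y \<and>
     XS I S x \<and> YD I S fvle P T x y \<and> ED I S fhl n H T x \<and> HO I S fholdup n L"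

end

theory Submission
  imports Defs
begin



lemma nontriv:
  fixes I :: "real set"
  assumes "is_interval I" "\<exists>a\<in>I. \<exists>b\<in>I. a < b" "t \<in> I"
  shows "at t within I \<noteq> bot"
proof -
  obtain a b where ab: "a \<in> I" "b \<in> I" "a < b" using assms(2) by blast
  have iv: "\<And>u v z. u \<in> I \<Longrightarrow> v \<in> I \<Longrightarrow> u \<le> z \<Longrightarrow> z \<le> v \<Longrightarrow> z \<in> I"
    using assms(1) unfolding is_interval_1 by blast
  have "t islimpt I"
  proof (cases "t < b")
    case True
    have "{t..b} \<subseteq> I" using iv[OF assms(3) ab(2)] by auto
    moreover have "t islimpt {t..b}" using True by simp
    ultimately show ?thesis by (rule islimpt_subset[rotated])
  next
    case False
    then have "a < t" using ab by simp
    have "{a..t} \<subseteq> I" using iv[OF ab(1) assms(3)] by auto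
    moreover have "t islimpt {a..t}" using \<open>a < t\<close> by simp
    ultimately show ?thesis by (rule islimpt_subset[rotated])
  qed
  then show ?thesis by (simp add: trivial_limit_within)
qed

lemma C1_deriv:
  assumes "C1_on I f" "t \<in> I" "at t within I \<noteq> bot"
  shows "(f has_vector_derivative Dt I f t) (at t within I)"
proof -
  obtain f' where "\<forall>t\<in>I. (f has_vector_derivative f' t) (at t within I)"
    using assms(1) unfolding C1_on_def by blast
  then have d: "(f has_vector_derivative f' t) (at t within I)" using assms(2) by (rule bspec)
  have "Dt I f t = f' t" by (rule vector_derivative_within[OF assms(3) d])
  with d show ?thesis by simp
qed

lemma C1_deriv_comp:
  fixes f :: "real \<Rightarrow> real^'c"
  assumes "C1_on I f" "t \<in> I" "at t within I \<noteq> bot"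
  shows "((\<lambda>s. f s $ i) has_vector_derivative Dt I (\<lambda>s. f s $ i) t) (at t within I)"
proof -
  have d: "((\<lambda>s. f s $ i) has_vector_derivative (Dt I f t $ i)) (at t within I)"
    using bounded_linear.has_vector_derivative[OF bounded_linear_vec_nth C1_deriv[OF assms]] .
  have "Dt I (\<lambda>s. f s $ i) t = Dt I f t $ i" by (rule vector_derivative_within[OF assms(3) d])
  with d show ?thesis by simp
qed

lemma key:
  fixes n :: "real \<Rightarrow> real" and x :: "real \<Rightarrow> real^'c::finite"
  assumes "C1_on I n" "C1_on I x" "t \<in> I" "at t within I \<noteq> bot"
  shows "Dt I (\<lambda>s. n s * x s $ i) t = Dt I n t * x t $ i + n t * Dt I (\<lambda>s. x s $ i) t"
proof -
  have h: "((\<lambda>s. n s * x s $ i) has_vector_derivative (n t * Dt I (\<lambda>s. x s $ i) t + Dt I n t * x t $ i)) (at t within I)"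
    by (rule has_vector_derivative_mult[OF C1_deriv[OF assms(1,3,4)] C1_deriv_comp[OF assms(2,3,4)]])
  have "Dt I (\<lambda>s. n s * x s $ i) t = n t * Dt I (\<lambda>s. x s $ i) t + Dt I n t * x t $ i"
    by (rule vector_derivative_within[OF assms(4) h])
  then show ?thesis by linarith
qed

lemma key_sum:
  fixes x :: "real \<Rightarrow> real^'c::finite"
  assumes "C1_on I x" "t \<in> I" "at t within I \<noteq> bot" "\<forall>s\<in>I. (\<Sum>i\<in>UNIV. x s $ i) = 1"
  shows "(\<Sum>i\<in>UNIV. Dt I (\<lambda>s. x s $ i) t) = 0"
proof -
  have h: "((\<lambda>s. \<Sum>i\<in>UNIV. x s $ i) has_vector_derivative (\<Sum>i\<in>UNIV. Dt I (\<lambda>s. x s $ i) t)) (at t within I)"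
    by (rule has_vector_derivative_sum) (rule C1_deriv_comp[OF assms(1-3)])
  have h1: "((\<lambda>s. 1::real) has_vector_derivative (\<Sum>i\<in>UNIV. Dt I (\<lambda>s. x s $ i) t)) (at t within I)"
    by (rule has_vector_derivative_transform[OF assms(2) _ h]) (use assms(4) in auto)
  have h0: "((\<lambda>s. 1::real) has_vector_derivative 0) (at t within I)" by (rule has_vector_derivative_const)
  show ?thesis by (rule vector_derivative_unique_within[OF assms(3) h1 h0])
qed


lemma s1: fixes a b c :: "'c::finite \<Rightarrow> real"
  shows "(\<Sum>i\<in>UNIV. L*(a i - b i) - V*(c i - b i)) = L*(sum a UNIV - sum b UNIV) - V*(sum c UNIV - sum b UNIV)"
  by (simp add: sum_subtractf sum_distrib_left[symmetric])
lemma s2: fixes a b c e :: "'c::finite \<Rightarrow> real"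
  shows "(\<Sum>i\<in>UNIV. L*(a i - b i) - V*(c i - b i) + W*(e i - b i)) = L*(sum a UNIV - sum b UNIV) - V*(sum c UNIV - sum b UNIV) + W*(sum e UNIV - sum b UNIV)"
  by (simp add: sum.distrib sum_subtractf sum_distrib_left[symmetric])
lemma s3: fixes b c e :: "'c::finite \<Rightarrow> real"
  shows "(\<Sum>i\<in>UNIV. - E * V*(c i - b i) + W*(e i - b i)) = - E * V*(sum c UNIV - sum b UNIV) + W*(sum e UNIV - sum b UNIV)"
  by (simp add: sum.distrib sum_subtractf sum_distrib_left[symmetric] sum_negf)
lemma s4: fixes a c :: "'c::finite \<Rightarrow> real"
  shows "(\<Sum>i\<in>UNIV. L * a i - V * c i) = L * sum a UNIV - V * sum c UNIV"
  by (simp add: sum_subtractf sum_distrib_left[symmetric])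
lemma s5: fixes a b c e :: "'c::finite \<Rightarrow> real"
  shows "(\<Sum>i\<in>UNIV. L * a i - V * c i - M * b i + W * e i) = L * sum a UNIV - V * sum c UNIV - M * sum b UNIV + W * sum e UNIV"
  by (simp add: sum.distrib sum_subtractf sum_distrib_left[symmetric])
lemma s6: fixes b c e :: "'c::finite \<Rightarrow> real"
  shows "(\<Sum>i\<in>UNIV. - E * V * c i - M * b i + W * e i) = - E * V * sum c UNIV - M * sum b UNIV + W * sum e UNIV"
  by (simp add: sum.distrib sum_subtractf sum_distrib_left[symmetric] sum_negf)
lemma sz: fixes d f :: "'c::finite \<Rightarrow> real"
  assumes "n \<noteq> 0" "\<forall>i. d i = f i / n" "sum d UNIV = 0" shows "sum f UNIV = 0"
proof -
  have "\<forall>i. f i = n * d i" using assms(1,2) by simp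
  then have "sum f UNIV = n * sum d UNIV" by (simp add: sum_distrib_left)
  then show ?thesis using assms(3) by simp
qed
lemma sd: fixes d b dx :: "'c::finite \<Rightarrow> real"
  assumes "\<forall>i. d i = dn * b i + n * dx i" "sum b UNIV = 1" "sum dx UNIV = 0" shows "sum d UNIV = dn"
proof -
  have "sum d UNIV = dn * sum b UNIV + n * sum dx UNIV" using assms(1) by (simp add: sum.distrib sum_distrib_left)
  then show ?thesis using assms by simp
qed


theorem mainTheorem1:
  fixes S :: nat and I :: "real set"
    and fvle :: "'c::finite \<Rightarrow> real \<Rightarrow> real \<Rightarrow> real^'c \<Rightarrow> real"
    and fhl fhv :: "real \<Rightarrow> real^'c \<Rightarrow> real" and fholdup :: "real \<Rightarrow> real"
    and eps P Q Tc :: "real \<Rightarrow> real"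
    and n H T V L :: "nat \<Rightarrow> real \<Rightarrow> real"
    and x y :: "nat \<Rightarrow> real \<Rightarrow> real^'c"
  assumes "S \<ge> 2" and "CARD('c) \<ge> 2"
    and "is_interval I" and "\<exists>a\<in>I. \<exists>b\<in>I. a < b"
    and "\<forall>i. C1_map (\<lambda>(p, temp, z). fvle i p temp z)"
    and "C1_map (\<lambda>(temp, z). fhl temp z)" and "C1_map (\<lambda>(temp, z). fhv temp z)"
    and "C1_map fholdup"
    and "C1_on I eps" and "C1_on I P" and "C1_on I Q" and "C1_on I Tc"
    and "\<forall>j\<in>{1..S}. C1_on I (n j) \<and> C1_on I (H j) \<and> C1_on I (T j) \<and> C1_on I (V j)
                     \<and> C1_on I (x j) \<and> C1_on I (y j)"
    and "\<forall>j\<in>{1..S-1}. C1_on I (L j)"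
    and "\<forall>t\<in>I. eps t \<noteq> 0"
    and "\<forall>t\<in>I. \<forall>j\<in>{1..S}. n j t \<noteq> 0 \<and> V j t \<noteq> 0"
  shows "sysA I S fvle fhl fhv fholdup eps P Q Tc n H T V L x y \<longleftrightarrow>
         sysBasic I S fvle fhl fhv fholdup eps P Q Tc n H T V L x y"
  
proof -
  have nt: "\<And>t. t \<in> I \<Longrightarrow> at t within I \<noteq> bot" by (rule nontriv[OF assms(3,4)])
  have Cn: "\<And>j. j \<in> {1..S} \<Longrightarrow> C1_on I (n j)" using assms(13) by blast
  have Cx: "\<And>j. j \<in> {1..S} \<Longrightarrow> C1_on I (x j)" using assms(13) by blast
  have K: "\<And>t j i. t \<in> I \<Longrightarrow> j \<in> {1..S} \<Longrightarrow> Dt I (\<lambda>s. n j s * x j s $ i) t = Dt I (n j) t * x j t $ i + n j t * Dt I (\<lambda>s. x j s $ i) t"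
    by (rule key[OF Cn Cx _ nt])
  have KS: "\<And>t j. XS I S x \<Longrightarrow> t \<in> I \<Longrightarrow> j \<in> {1..S} \<Longrightarrow> (\<Sum>i\<in>UNIV. Dt I (\<lambda>s. x j s $ i) t) = 0"
  proof -
    fix t j assume "XS I S x" "t \<in> I" "j \<in> {1..S}"
    then have "\<forall>s\<in>I. (\<Sum>i\<in>UNIV. x j s $ i) = 1" unfolding XS_def by (meson bspec)
    then show "(\<Sum>i\<in>UNIV. Dt I (\<lambda>s. x j s $ i) t) = 0" by (rule key_sum[OF Cx[OF \<open>j \<in> {1..S}\<close>] \<open>t \<in> I\<close> nt[OF \<open>t \<in> I\<close>]])
  qed
  have nz: "\<And>t j. t \<in> I \<Longrightarrow> j \<in> {1..S} \<Longrightarrow> n j t \<noteq> 0" using assms(16) by blast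
  have vz: "\<And>t j. t \<in> I \<Longrightarrow> j \<in> {1..S} \<Longrightarrow> V j t \<noteq> 0" using assms(16) by blast
  have ez: "\<And>t. t \<in> I \<Longrightarrow> eps t \<noteq> 0" using assms(15) by blast
  have S1: "1 \<in> {1..S}" "2 \<in> {1..S}" "S \<in> {1..S}" "S - 1 \<in> {1..S}" using assms(1) by auto
  have a1: "D = P * b + Q" if "nn \<noteq> 0" "D = dn * b + nn * dx" "dn = P" "dx = Q / nn" for D P b Q nn dn dx :: real
    using that by simp
  have a2: "dx = (D - dn * b) / nn" if "nn \<noteq> 0" "D = dn * b + nn * dx" for D b nn dn dx :: real
    using that by (simp add: field_simps)
  have xsum: "\<And>t j. XS I S x \<Longrightarrow> t \<in> I \<Longrightarrow> j \<in> {1..S} \<Longrightarrow> (\<Sum>i\<in>UNIV. x j t $ i) = 1" unfolding XS_def by (meson bspec)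
  show ?thesis
  proof
    assume A: "sysA I S fvle fhl fhv fholdup eps P Q Tc n H T V L x y"
    then have TM: "TM I S eps n L V" and CM: "CM0 I S eps n L V x y" and XS: "XS I S x"
      unfolding sysA_def by auto
    have tm1: "Dt I (n 1) t = L 1 t - V 1 t" if t: "t \<in> I" for t
      by (rule conjunct1[OF bspec[OF TM[unfolded TM_def] t]])
    have tmj: "Dt I (n j) t = L j t - V j t - L (j-1) t + V (j-1) t" if t: "t \<in> I" and j: "j \<in> {2..S-1}" for t j
      by (rule bspec[OF conjunct1[OF conjunct2[OF bspec[OF TM[unfolded TM_def] t]]] j])
    have tmS: "Dt I (n S) t = - eps t * V S t - L (S-1) t + V (S-1) t" if t: "t \<in> I" for t
      by (rule conjunct2[OF conjunct2[OF bspec[OF TM[unfolded TM_def] t]]])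
    have cm1: "Dt I (\<lambda>s. x 1 s $ i) t = (L 1 t * (x 2 t $ i - x 1 t $ i) - V 1 t * (y 1 t $ i - x 1 t $ i)) / n 1 t" if t: "t \<in> I" for t i
      by (rule conjunct1[OF spec[OF bspec[OF CM[unfolded CM0_def] t], of i]])
    have cmj: "Dt I (\<lambda>s. x j s $ i) t = (L j t * (x (j+1) t $ i - x j t $ i) - V j t * (y j t $ i - x j t $ i) + V (j-1) t * (y (j-1) t $ i - x j t $ i)) / n j t" if t: "t \<in> I" and j: "j \<in> {2..S-1}" for t i j
      by (rule bspec[OF conjunct1[OF conjunct2[OF spec[OF bspec[OF CM[unfolded CM0_def] t], of i]]] j])
    have cmS: "Dt I (\<lambda>s. x S s $ i) t = (- eps t * V S t * (y S t $ i - x S t $ i) + V (S-1) t * (y (S-1) t $ i - x S t $ i)) / n S t" if t: "t \<in> I" for t i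
      by (rule conjunct2[OF conjunct2[OF spec[OF bspec[OF CM[unfolded CM0_def] t], of i]]])
    have YS: "YS I S y" unfolding YS_def
    proof (intro ballI)
      fix t j assume t: "t \<in> I" and j: "j \<in> {1..S}"
      have xs: "\<And>j. j \<in> {1..S} \<Longrightarrow> (\<Sum>i\<in>UNIV. x j t $ i) = 1" by (rule xsum[OF XS t])
      have st1: "(\<Sum>i\<in>UNIV. y 1 t $ i) = 1"
      proof -
        have "(\<Sum>i\<in>UNIV. L 1 t * (x 2 t $ i - x 1 t $ i) - V 1 t * (y 1 t $ i - x 1 t $ i)) = 0"
          apply (rule sz[where n="n 1 t" and d="\<lambda>i. Dt I (\<lambda>s. x 1 s $ i) t"])
            apply (rule nz[OF t S1(1)])
           apply (use cm1[OF t] in simp)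
          apply (rule KS[OF XS t S1(1)])
          done
        then have "L 1 t * ((\<Sum>i\<in>UNIV. x 2 t $ i) - (\<Sum>i\<in>UNIV. x 1 t $ i)) - V 1 t * ((\<Sum>i\<in>UNIV. y 1 t $ i) - (\<Sum>i\<in>UNIV. x 1 t $ i)) = 0"
          by (simp only: s1)
        then show ?thesis using xs[OF S1(1)] xs[OF S1(2)] vz[OF t S1(1)] by simp
      qed
      have mid: "\<forall>j. j \<in> {1..S-1} \<longrightarrow> (\<Sum>i\<in>UNIV. y j t $ i) = 1"
      proof
        fix j show "j \<in> {1..S-1} \<longrightarrow> (\<Sum>i\<in>UNIV. y j t $ i) = 1"
        proof (induction j)
          case 0 then show ?case by simp
        next
          case (Suc k)
          show ?case
          proof (cases "k = 0")
            case True then show ?thesis using st1 by simp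
          next
            case False
            show ?thesis
            proof
              assume sk: "Suc k \<in> {1..S-1}"
              then have jm: "Suc k \<in> {2..S-1}" using False by auto
              have jS: "Suc k \<in> {1..S}" "k \<in> {1..S}" "Suc k + 1 \<in> {1..S}" using sk False by auto
              have ih: "(\<Sum>i\<in>UNIV. y k t $ i) = 1" using Suc sk False by auto
              have "(\<Sum>i\<in>UNIV. L (Suc k) t * (x (Suc k + 1) t $ i - x (Suc k) t $ i) - V (Suc k) t * (y (Suc k) t $ i - x (Suc k) t $ i) + V (Suc k - 1) t * (y (Suc k - 1) t $ i - x (Suc k) t $ i)) = 0"
                apply (rule sz[where n="n (Suc k) t" and d="\<lambda>i. Dt I (\<lambda>s. x (Suc k) s $ i) t"])
                  apply (rule nz[OF t jS(1)])
                 apply (use cmj[OF t jm] in simp)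
                apply (rule KS[OF XS t jS(1)])
                done
              then have "L (Suc k) t * ((\<Sum>i\<in>UNIV. x (Suc k + 1) t $ i) - (\<Sum>i\<in>UNIV. x (Suc k) t $ i))
                 - V (Suc k) t * ((\<Sum>i\<in>UNIV. y (Suc k) t $ i) - (\<Sum>i\<in>UNIV. x (Suc k) t $ i))
                 + V (Suc k - 1) t * ((\<Sum>i\<in>UNIV. y (Suc k - 1) t $ i) - (\<Sum>i\<in>UNIV. x (Suc k) t $ i)) = 0"
                by (simp only: s2)
              then show "(\<Sum>i\<in>UNIV. y (Suc k) t $ i) = 1"
                using xs[OF jS(1)] xs[OF jS(3)] ih vz[OF t jS(1)] by simp
            qed
          qed
        qed
      qed
      have stS: "(\<Sum>i\<in>UNIV. y S t $ i) = 1"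
      proof -
        have "(\<Sum>i\<in>UNIV. - eps t * V S t * (y S t $ i - x S t $ i) + V (S-1) t * (y (S-1) t $ i - x S t $ i)) = 0"
          apply (rule sz[where n="n S t" and d="\<lambda>i. Dt I (\<lambda>s. x S s $ i) t"])
            apply (rule nz[OF t S1(3)])
           apply (use cmS[OF t] in simp)
          apply (rule KS[OF XS t S1(3)])
          done
        then have "- eps t * V S t * ((\<Sum>i\<in>UNIV. y S t $ i) - (\<Sum>i\<in>UNIV. x S t $ i)) + V (S-1) t * ((\<Sum>i\<in>UNIV. y (S-1) t $ i) - (\<Sum>i\<in>UNIV. x S t $ i)) = 0"
          by (simp only: s3)
        moreover have "S - 1 \<in> {1..S-1}" using assms(1) by auto
        ultimately show ?thesis using xs[OF S1(3)] mid vz[OF t S1(3)] ez[OF t] by simp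
      qed
      show "(\<Sum>i\<in>UNIV. y j t $ i) = 1"
      proof (cases "j = S")
        case True then show ?thesis using stS by simp
      next
        case False then show ?thesis using mid j by auto
      qed
    qed
    have OCM: "OCM I S eps n L V x y" unfolding OCM_def
    proof (intro ballI allI conjI)
      fix t i assume t: "t \<in> I"
      show "Dt I (\<lambda>s. n 1 s * x 1 s $ i) t = L 1 t * x 2 t $ i - V 1 t * y 1 t $ i"
        using a1[OF nz[OF t S1(1)] K[OF t S1(1)] tm1[OF t] cm1[OF t]] by (simp add: algebra_simps)
      show "Dt I (\<lambda>s. n S s * x S s $ i) t = - eps t * V S t * y S t $ i - L (S-1) t * x S t $ i + V (S-1) t * y (S-1) t $ i"
        using a1[OF nz[OF t S1(3)] K[OF t S1(3)] tmS[OF t] cmS[OF t]] by (simp add: algebra_simps)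
      fix j assume j: "j \<in> {2..S-1}"
      then have jS: "j \<in> {1..S}" by auto
      show "Dt I (\<lambda>s. n j s * x j s $ i) t = L j t * x (j+1) t $ i - V j t * y j t $ i - L (j-1) t * x j t $ i + V (j-1) t * y (j-1) t $ i"
        using a1[OF nz[OF t jS] K[OF t jS] tmj[OF t j] cmj[OF t j]] by (simp add: algebra_simps)
    qed
    show "sysBasic I S fvle fhl fhv fholdup eps P Q Tc n H T V L x y"
      using A YS OCM by (simp add: sysA_def sysBasic_def)
  next
    assume B: "sysBasic I S fvle fhl fhv fholdup eps P Q Tc n H T V L x y"
    then have YS: "YS I S y" and OCM: "OCM I S eps n L V x y" and XS: "XS I S x"
      unfolding sysBasic_def by auto
    have oc1: "Dt I (\<lambda>s. n 1 s * x 1 s $ i) t = L 1 t * x 2 t $ i - V 1 t * y 1 t $ i" if t: "t \<in> I" for t i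
      by (rule conjunct1[OF spec[OF bspec[OF OCM[unfolded OCM_def] t], of i]])
    have ocj: "Dt I (\<lambda>s. n j s * x j s $ i) t = L j t * x (j+1) t $ i - V j t * y j t $ i - L (j-1) t * x j t $ i + V (j-1) t * y (j-1) t $ i" if t: "t \<in> I" and j: "j \<in> {2..S-1}" for t i j
      by (rule bspec[OF conjunct1[OF conjunct2[OF spec[OF bspec[OF OCM[unfolded OCM_def] t], of i]]] j])
    have ocS: "Dt I (\<lambda>s. n S s * x S s $ i) t = - eps t * V S t * y S t $ i - L (S-1) t * x S t $ i + V (S-1) t * y (S-1) t $ i" if t: "t \<in> I" for t i
      by (rule conjunct2[OF conjunct2[OF spec[OF bspec[OF OCM[unfolded OCM_def] t], of i]]])
    have ys: "\<And>t j. t \<in> I \<Longrightarrow> j \<in> {1..S} \<Longrightarrow> (\<Sum>i\<in>UNIV. y j t $ i) = 1" using YS unfolding YS_def by (meson bspec)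
    have sdn: "(\<Sum>i\<in>UNIV. Dt I (\<lambda>s. n j s * x j s $ i) t) = Dt I (n j) t" if t: "t \<in> I" and j: "j \<in> {1..S}" for t j
      by (rule sd[OF _ xsum[OF XS t j] KS[OF XS t j]]) (use K[OF t j] in auto)
    have tm1: "Dt I (n 1) t = L 1 t - V 1 t" if t: "t \<in> I" for t
    proof -
      have "Dt I (n 1) t = (\<Sum>i\<in>UNIV. Dt I (\<lambda>s. n 1 s * x 1 s $ i) t)" using sdn[OF t S1(1)] by simp
      also have "\<dots> = (\<Sum>i\<in>UNIV. L 1 t * x 2 t $ i - V 1 t * y 1 t $ i)" using oc1[OF t] by simp
      also have "\<dots> = L 1 t * (\<Sum>i\<in>UNIV. x 2 t $ i) - V 1 t * (\<Sum>i\<in>UNIV. y 1 t $ i)" by (rule s4)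
      finally show ?thesis using xsum[OF XS t S1(2)] ys[OF t S1(1)] by simp
    qed
    have tmS: "Dt I (n S) t = - eps t * V S t - L (S-1) t + V (S-1) t" if t: "t \<in> I" for t
    proof -
      have "Dt I (n S) t = (\<Sum>i\<in>UNIV. Dt I (\<lambda>s. n S s * x S s $ i) t)" using sdn[OF t S1(3)] by simp
      also have "\<dots> = (\<Sum>i\<in>UNIV. - eps t * V S t * y S t $ i - L (S-1) t * x S t $ i + V (S-1) t * y (S-1) t $ i)" using ocS[OF t] by simp
      also have "\<dots> = - eps t * V S t * (\<Sum>i\<in>UNIV. y S t $ i) - L (S-1) t * (\<Sum>i\<in>UNIV. x S t $ i) + V (S-1) t * (\<Sum>i\<in>UNIV. y (S-1) t $ i)" by (rule s6)
      finally show ?thesis using xsum[OF XS t S1(3)] ys[OF t S1(3)] ys[OF t S1(4)] by simp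
    qed
    have tmj: "Dt I (n j) t = L j t - V j t - L (j-1) t + V (j-1) t" if t: "t \<in> I" and j: "j \<in> {2..S-1}" for t j
    proof -
      have jS: "j \<in> {1..S}" "j + 1 \<in> {1..S}" "j - 1 \<in> {1..S}" using j by auto
      have "Dt I (n j) t = (\<Sum>i\<in>UNIV. Dt I (\<lambda>s. n j s * x j s $ i) t)" using sdn[OF t jS(1)] by simp
      also have "\<dots> = (\<Sum>i\<in>UNIV. L j t * x (j+1) t $ i - V j t * y j t $ i - L (j-1) t * x j t $ i + V (j-1) t * y (j-1) t $ i)" using ocj[OF t j] by simp
      also have "\<dots> = L j t * (\<Sum>i\<in>UNIV. x (j+1) t $ i) - V j t * (\<Sum>i\<in>UNIV. y j t $ i) - L (j-1) t * (\<Sum>i\<in>UNIV. x j t $ i) + V (j-1) t * (\<Sum>i\<in>UNIV. y (j-1) t $ i)" by (rule s5)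
      finally show ?thesis using xsum[OF XS t jS(2)] xsum[OF XS t jS(1)] ys[OF t jS(1)] ys[OF t jS(3)] by simp
    qed
    have TM: "TM I S eps n L V" unfolding TM_def
    proof (intro ballI conjI)
      fix t assume t: "t \<in> I"
      show "Dt I (n 1) t = L 1 t - V 1 t" by (rule tm1[OF t])
      show "Dt I (n S) t = - eps t * V S t - L (S-1) t + V (S-1) t" by (rule tmS[OF t])
      fix j assume j: "j \<in> {2..S-1}"
      show "Dt I (n j) t = L j t - V j t - L (j-1) t + V (j-1) t" by (rule tmj[OF t j])
    qed
    have CM: "CM0 I S eps n L V x y" unfolding CM0_def
    proof (intro ballI allI conjI)
      fix t i assume t: "t \<in> I"
      have "Dt I (\<lambda>s. x 1 s $ i) t = (Dt I (\<lambda>s. n 1 s * x 1 s $ i) t - Dt I (n 1) t * x 1 t $ i) / n 1 t"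
        by (rule a2[OF nz[OF t S1(1)] K[OF t S1(1)]])
      also have "Dt I (\<lambda>s. n 1 s * x 1 s $ i) t - Dt I (n 1) t * x 1 t $ i = L 1 t * (x 2 t $ i - x 1 t $ i) - V 1 t * (y 1 t $ i - x 1 t $ i)"
        unfolding oc1[OF t] tm1[OF t] by (simp add: algebra_simps)
      finally show "Dt I (\<lambda>s. x 1 s $ i) t = (L 1 t * (x 2 t $ i - x 1 t $ i) - V 1 t * (y 1 t $ i - x 1 t $ i)) / n 1 t" .
      have "Dt I (\<lambda>s. x S s $ i) t = (Dt I (\<lambda>s. n S s * x S s $ i) t - Dt I (n S) t * x S t $ i) / n S t"
        by (rule a2[OF nz[OF t S1(3)] K[OF t S1(3)]])
      also have "Dt I (\<lambda>s. n S s * x S s $ i) t - Dt I (n S) t * x S t $ i = - eps t * V S t * (y S t $ i - x S t $ i) + V (S-1) t * (y (S-1) t $ i - x S t $ i)"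
        unfolding ocS[OF t] tmS[OF t] by (simp add: algebra_simps)
      finally show "Dt I (\<lambda>s. x S s $ i) t = (- eps t * V S t * (y S t $ i - x S t $ i) + V (S-1) t * (y (S-1) t $ i - x S t $ i)) / n S t" .
      fix j assume j: "j \<in> {2..S-1}"
      then have jS: "j \<in> {1..S}" by auto
      have "Dt I (\<lambda>s. x j s $ i) t = (Dt I (\<lambda>s. n j s * x j s $ i) t - Dt I (n j) t * x j t $ i) / n j t"
        by (rule a2[OF nz[OF t jS] K[OF t jS]])
      also have "Dt I (\<lambda>s. n j s * x j s $ i) t - Dt I (n j) t * x j t $ i = L j t * (x (j+1) t $ i - x j t $ i) - V j t * (y j t $ i - x j t $ i) + V (j-1) t * (y (j-1) t $ i - x j t $ i)"
        unfolding ocj[OF t j] tmj[OF t j] by (simp add: algebra_simps)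
      finally show "Dt I (\<lambda>s. x j s $ i) t = (L j t * (x (j+1) t $ i - x j t $ i) - V j t * (y j t $ i - x j t $ i) + V (j-1) t * (y (j-1) t $ i - x j t $ i)) / n j t" .
    qed
    show "sysA I S fvle fhl fhv fholdup eps P Q Tc n H T V L x y"
      using B TM CM by (simp add: sysA_def sysBasic_def)
  qed
qed

end
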